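(* Let $\mathcal{R}=(G_0,e\to R)$ be an expanding replacement system with full expansion sequence $\{G_n\}$, symbol space $\Omega$ and gluing relation $\sim$. Then: (1) each gluing vertex is represented by at least one point of $\Omega$; (2) each point of $\Omega$ represents at most one gluing vertex; (3) two distinct points of $\Omega$ are equivalent under $\sim$ if and only if they represent the same gluing vertex; (4) $\sim$ is an equivalence relation.
   Context: A graph means a finite directed multigraph (loops, multiple edges allowed). A replacement system $\mathcal{R}=(G_0,e\to R)$: $G_0$ a graph, $e$ a non-loop directed edge from $v$ to $w$, $R$ a graph containing $v,w$ (initial and terminal vertices of $R$; other vertices interior). Replacing an edge $\varepsilon$ of a graph means deleting it and gluing in a copy of $R$ with initial/terminal vertices identified with those of $\varepsilon$; new edges are $\varepsilon\zeta$ ($\zeta\in E(R)$) and new vertices $\varepsilon\nu$ ($\nu$ interior vertex of $R$). The full expansion sequence: $G_n$ is obtained from $G_{n-1}$ by replacing every edge, so $E(G_n)$ consists of words $\varepsilon_0\cdots\varepsilon_n$ ($\varepsilon_0\in E(G_0)$, $\varepsilon_i\in E(R)$) and $V(G_0)\subset V(G_1)\subset\cdots$. $\mathcal{R}$ is expanding if neither $G_0$ nor $R$ has isolated vertices, the initial and terminal vertices of $R$ are not joined by an edge, and $R$ has at least three vertices and two edges. The symbol space is $\Omega=E(G_0)\times E(R)^{\mathbb{N}}$. The gluing relation: $\varepsilon_0\varepsilon_1\cdots\sim\varepsilon_0'\varepsilon_1'\cdots$ iff for all $n$ the edges $\varepsilon_0\cdots\varepsilon_n$ and $\varepsilon_0'\cdots\varepsilon_n'$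 of $G_n$ share at least one vertex. Gluing vertices are the elements of $\bigcup_n V(G_n)$; a point $\varepsilon_0\varepsilon_1\cdots\in\Omega$ represents a gluing vertex $u$ if the edge $\varepsilon_0\cdots\varepsilon_n$ of $G_n$ is incident on $u$ for all sufficiently large $n$. *)

theory Defs
  imports "Graph_Theory.Digraph"
begin

text \<open>A graph is a finite directed multigraph: a fin_digraph (loops and multiple arcs allowed).
  Vertex iR of R plays the role of v, and tR the role of w.\<close>

definition no_isolated :: "('a,'b) pre_digraph \<Rightarrow> bool" where
  "no_isolated G \<longleftrightarrow> (\<forall>x\<in>verts G. \<exists>a\<in>arcs G. tail G a = x \<or> head G a = x)"

definition replacement_system ::
  "('v,'e) pre_digraph \<Rightarrow> 'e \<Rightarrow> ('w,'r) pre_digraph \<Rightarrow> 'w \<Rightarrow> 'w \<Rightarrow> bool" where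
  "replacement_system G0 e R iR tR \<longleftrightarrow>
     fin_digraph G0 \<and> fin_digraph R \<and> e \<in> arcs G0 \<and> tail G0 e \<noteq> head G0 e \<and>
     iR \<in> verts R \<and> tR \<in> verts R \<and> iR \<noteq> tR"

definition expanding ::
  "('v,'e) pre_digraph \<Rightarrow> 'e \<Rightarrow> ('w,'r) pre_digraph \<Rightarrow> 'w \<Rightarrow> 'w \<Rightarrow> bool" where
  "expanding G0 e R iR tR \<longleftrightarrow>
     replacement_system G0 e R iR tR \<and> no_isolated G0 \<and> no_isolated R \<and>
     \<not> (\<exists>a\<in>arcs R. (tail R a = iR \<and> head R a = tR) \<or> (tail R a = tR \<and> head R a = iR)) \<and>
     card (verts R) \<ge> 3 \<and> card (arcs R) \<ge> 2"

text \<open>Vertices of the graphs G_n: original vertices of G0, and new vertices \<open>\<epsilon>\<nu>\<close>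
  where \<open>\<epsilon> = \<epsilon>0 \<epsilon>1 ... \<epsilon>k\<close> is an edge of G_k (written New \<epsilon>0 [\<epsilon>1,...,\<epsilon>k] \<nu>)
  and \<nu> is an interior vertex of R.  An edge \<open>\<epsilon>0 \<epsilon>1 ... \<epsilon>n\<close> of G_n is written
  as the pair (\<epsilon>0, [\<epsilon>1,...,\<epsilon>n]).\<close>

datatype ('v,'e,'r,'w) gvert = Orig 'v | New 'e "'r list" 'w

text \<open>Endpoints (initial, terminal) of an edge of G_n; the list argument is reversed,
  i.e. ends_rev e0 [\<epsilon>n,...,\<epsilon>1] are the endpoints of the edge \<open>\<epsilon>0 \<epsilon>1 ... \<epsilon>n\<close>.
  Replacing the edge x by a copy of R identifies iR with the initial and tR with
  the terminal vertex of x; an interior vertex u of R becomes the new vertex x u.\<close>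

fun ends_rev :: "('v,'e) pre_digraph \<Rightarrow> ('w,'r) pre_digraph \<Rightarrow> 'w \<Rightarrow> 'w \<Rightarrow>
    'e \<Rightarrow> 'r list \<Rightarrow> ('v,'e,'r,'w) gvert \<times> ('v,'e,'r,'w) gvert" where
  "ends_rev G0 R iR tR e0 [] = (Orig (tail G0 e0), Orig (head G0 e0))"
| "ends_rev G0 R iR tR e0 (z # rs) =
    (let st = ends_rev G0 R iR tR e0 rs;
         f = (\<lambda>u. if u = iR then fst st else if u = tR then snd st else New e0 (rev rs) u)
     in (f (tail R z), f (head R z)))"

definition edge_ends :: "('v,'e) pre_digraph \<Rightarrow> ('w,'r) pre_digraph \<Rightarrow> 'w \<Rightarrow> 'w \<Rightarrow>
    'e \<times> 'r list \<Rightarrow> ('v,'e,'r,'w) gvert \<times> ('v,'e,'r,'w) gvert" where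
  "edge_ends G0 R iR tR x = ends_rev G0 R iR tR (fst x) (rev (snd x))"

definition incident :: "('v,'e) pre_digraph \<Rightarrow> ('w,'r) pre_digraph \<Rightarrow> 'w \<Rightarrow> 'w \<Rightarrow>
    'e \<times> 'r list \<Rightarrow> ('v,'e,'r,'w) gvert \<Rightarrow> bool" where
  "incident G0 R iR tR x u \<longleftrightarrow>
     u = fst (edge_ends G0 R iR tR x) \<or> u = snd (edge_ends G0 R iR tR x)"

definition expansion_verts :: "('v,'e) pre_digraph \<Rightarrow> ('w,'r) pre_digraph \<Rightarrow> 'w \<Rightarrow> 'w \<Rightarrow>
    nat \<Rightarrow> ('v,'e,'r,'w) gvert set" where
  "expansion_verts G0 R iR tR n =
     Orig ` verts G0 \<union>
     {New e0 zs u | e0 zs u. e0 \<in> arcs G0 \<and> set zs \<subseteq> arcs R \<and> length zs < n \<and>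
                             u \<in> verts R \<and> u \<noteq> iR \<and> u \<noteq> tR}"

definition expansion_arcs :: "('v,'e) pre_digraph \<Rightarrow> ('w,'r) pre_digraph \<Rightarrow> nat \<Rightarrow> ('e \<times> 'r list) set" where
  "expansion_arcs G0 R n = {(e0, zs). e0 \<in> arcs G0 \<and> set zs \<subseteq> arcs R \<and> length zs = n}"

definition gluing_vertices :: "('v,'e) pre_digraph \<Rightarrow> ('w,'r) pre_digraph \<Rightarrow> 'w \<Rightarrow> 'w \<Rightarrow>
    ('v,'e,'r,'w) gvert set" where
  "gluing_vertices G0 R iR tR = (\<Union>n. expansion_verts G0 R iR tR n)"

text \<open>Symbol space: a point \<open>\<epsilon>0 \<epsilon>1 \<epsilon>2 ...\<close> is the pair (\<epsilon>0, f) with f i = \<epsilon>(i+1).\<close>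
definition symbol_space :: "('v,'e) pre_digraph \<Rightarrow> ('w,'r) pre_digraph \<Rightarrow> ('e \<times> (nat \<Rightarrow> 'r)) set" where
  "symbol_space G0 R = {(e0, f). e0 \<in> arcs G0 \<and> (\<forall>i. f i \<in> arcs R)}"

definition prefix_edge :: "'e \<times> (nat \<Rightarrow> 'r) \<Rightarrow> nat \<Rightarrow> 'e \<times> 'r list" where
  "prefix_edge p n = (fst p, map (snd p) [0..<n])"

definition glued :: "('v,'e) pre_digraph \<Rightarrow> ('w,'r) pre_digraph \<Rightarrow> 'w \<Rightarrow> 'w \<Rightarrow>
    'e \<times> (nat \<Rightarrow> 'r) \<Rightarrow> 'e \<times> (nat \<Rightarrow> 'r) \<Rightarrow> bool" where
  "glued G0 R iR tR p q \<longleftrightarrow>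
     (\<forall>n. \<exists>u. incident G0 R iR tR (prefix_edge p n) u \<and> incident G0 R iR tR (prefix_edge q n) u)"

definition represents :: "('v,'e) pre_digraph \<Rightarrow> ('w,'r) pre_digraph \<Rightarrow> 'w \<Rightarrow> 'w \<Rightarrow>
    'e \<times> (nat \<Rightarrow> 'r) \<Rightarrow> ('v,'e,'r,'w) gvert \<Rightarrow> bool" where
  "represents G0 R iR tR p u \<longleftrightarrow>
     (\<exists>N. \<forall>n\<ge>N. incident G0 R iR tR (prefix_edge p n) u)"

end

theory Submission
  imports Defs
begin

context
  fixes G0 :: "('v,'e) pre_digraph" and R :: "('w,'r) pre_digraph" and iR tR :: 'w
begin

definition small :: "nat \<Rightarrow> ('v,'e,'r,'w) gvert \<Rightarrow> bool" where
  "small n u = (case u of Orig _ \<Rightarrow> True | New _ l _ \<Rightarrow> length l < n)"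

lemma edge_ends_snoc:
  "edge_ends G0 R iR tR (e0, l @ [z]) =
    (let st = edge_ends G0 R iR tR (e0, l);
         f = (\<lambda>u. if u = iR then fst st else if u = tR then snd st else New e0 l u)
     in (f (tail R z), f (head R z)))"
  by (simp add: edge_ends_def Let_def)

lemma edge_ends_Nil:
  "edge_ends G0 R iR tR (e0, []) = (Orig (tail G0 e0), Orig (head G0 e0))"
  by (simp add: edge_ends_def)

lemma incident_snoc:
  "incident G0 R iR tR (e0, l @ [z]) u \<Longrightarrow> incident G0 R iR tR (e0, l) u \<or> (\<exists>w. u = New e0 l w)"
  unfolding incident_def edge_ends_snoc Let_def by (auto split: if_splits)

lemma small_ends:
  "small (length l) (fst (edge_ends G0 R iR tR (e0,l))) \<and> small (length l) (snd (edge_ends G0 R iR tR (e0,l)))"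
proof (induction l rule: rev_induct)
  case Nil
  then show ?case by (simp add: edge_ends_Nil small_def)
next
  case (snoc z l)
  have m: "small (length l) x \<Longrightarrow> small (Suc (length l)) x" for x
    by (auto simp: small_def split: gvert.splits)
  show ?case using snoc m unfolding edge_ends_snoc Let_def by (auto simp: small_def)
qed

lemma incident_small: "incident G0 R iR tR (e0,l) u \<Longrightarrow> small (length l) u"
  using small_ends[of l e0] unfolding incident_def by auto

lemma New_not_incident:
  "incident G0 R iR tR (e0', l') (New e0 l w) \<Longrightarrow> length l' \<le> length l \<Longrightarrow> False"
  using incident_small[of e0' l' "New e0 l w"] by (simp add: small_def)

lemma prefix_edge_Suc: "prefix_edge p (Suc n) = (fst p, map (snd p) [0..<n] @ [snd p n])"
  by (simp add: prefix_edge_def)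

lemma descent:
  "incident G0 R iR tR (prefix_edge p m) u \<Longrightarrow> n \<le> m \<Longrightarrow>
   incident G0 R iR tR (prefix_edge p n) u \<or>
   (\<exists>l w. u = New (fst p) l w \<and> n \<le> length l \<and> take n l = map (snd p) [0..<n])"
proof (induction m)
  case 0
  then show ?case by simp
next
  case (Suc m)
  show ?case
  proof (cases "n = Suc m")
    case True
    then show ?thesis using Suc by simp
  next
    case False
    then have nm: "n \<le> m" using Suc by simp
    from Suc.prems(1) have "incident G0 R iR tR (prefix_edge p m) u \<or> (\<exists>w. u = New (fst p) (map (snd p) [0..<m]) w)"
      unfolding prefix_edge_Suc by (auto dest: incident_snoc simp: prefix_edge_def)
    then show ?thesis
    proof
      assume "incident G0 R iR tR (prefix_edge p m) u"
      then show ?thesis using Suc.IH nm by blast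
    next
      assume "\<exists>w. u = New (fst p) (map (snd p) [0..<m]) w"
      then obtain w where "u = New (fst p) (map (snd p) [0..<m]) w" by blast
      moreover have "take n (map (snd p) [0..<m]) = map (snd p) [0..<n]"
        using nm by (simp add: take_map)
      ultimately show ?thesis using nm by auto
    qed
  qed
qed

lemma represents_glued:
  assumes "represents G0 R iR tR p u" "represents G0 R iR tR r u"
  shows "glued G0 R iR tR p r"
  unfolding glued_def
proof
  fix n
  from assms obtain N1 N2 where N1: "\<forall>n\<ge>N1. incident G0 R iR tR (prefix_edge p n) u"
    and N2: "\<forall>n\<ge>N2. incident G0 R iR tR (prefix_edge r n) u"
    unfolding represents_def by blast
  define m where "m = max n (max N1 N2)"
  have ip: "incident G0 R iR tR (prefix_edge p m) u" and ir: "incident G0 R iR tR (prefix_edge r m) u"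
    using N1 N2 by (auto simp: m_def)
  have nm: "n \<le> m" by (simp add: m_def)
  note dp = descent[OF ip nm] and dr = descent[OF ir nm]
  show "\<exists>u. incident G0 R iR tR (prefix_edge p n) u \<and> incident G0 R iR tR (prefix_edge r n) u"
  proof (cases "incident G0 R iR tR (prefix_edge p n) u")
    case True
    show ?thesis
    proof (cases "incident G0 R iR tR (prefix_edge r n) u")
      case True
      then show ?thesis using \<open>incident G0 R iR tR (prefix_edge p n) u\<close> by blast
    next
      case False
      then obtain l w where "u = New (fst r) l w" "n \<le> length l" using dr by blast
      then show ?thesis using True New_not_incident[of "fst p" "map (snd p) [0..<n]" "fst r" l w]
        by (auto simp: prefix_edge_def)
    qed
  next
    case False
    then obtain l w where lw: "u = New (fst p) l w" "n \<le> length l" "take n l = map (snd p) [0..<n]"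
      using dp by blast
    show ?thesis
    proof (cases "incident G0 R iR tR (prefix_edge r n) u")
      case True
      then show ?thesis using lw New_not_incident[of "fst r" "map (snd r) [0..<n]" "fst p" l w]
        by (auto simp: prefix_edge_def)
    next
      case False
      then obtain l' w' where "u = New (fst r) l' w'" "take n l' = map (snd r) [0..<n]" using dr by blast
      then have "prefix_edge p n = prefix_edge r n" using lw by (auto simp: prefix_edge_def)
      then show ?thesis unfolding incident_def by metis
    qed
  qed
qed

lemma unique_rep:
  assumes exp: "expanding G0 e R iR tR" and pO: "p \<in> symbol_space G0 R"
    and ru: "represents G0 R iR tR p u" and ru': "represents G0 R iR tR p u'"
  shows "u = u'"
proof -
  from ru ru' obtain N1 N2 where N1: "\<forall>n\<ge>N1. incident G0 R iR tR (prefix_edge p n) u"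
    and N2: "\<forall>n\<ge>N2. incident G0 R iR tR (prefix_edge p n) u'"
    unfolding represents_def by blast
  define n where "n = max N1 N2"
  define st where "st = edge_ends G0 R iR tR (prefix_edge p n)"
  define z where "z = snd p n"
  define f where "f = (\<lambda>x. if x = iR then fst st else if x = tR then snd st else New (fst p) (map (snd p) [0..<n]) x)"
  have ne: "iR \<noteq> tR" and noedge: "\<not> ((tail R z = iR \<and> head R z = tR) \<or> (tail R z = tR \<and> head R z = iR))"
    using exp pO by (auto simp: expanding_def replacement_system_def symbol_space_def z_def)
  have ends1: "edge_ends G0 R iR tR (prefix_edge p (Suc n)) = (f (tail R z), f (head R z))"
    unfolding prefix_edge_Suc edge_ends_snoc Let_def f_def st_def z_def by (simp add: prefix_edge_def)
  have i0: "u = fst st \<or> u = snd st" "u' = fst st \<or> u' = snd st"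
    using N1 N2 by (auto simp: n_def st_def incident_def)
  have i1: "u = f (tail R z) \<or> u = f (head R z)" "u' = f (tail R z) \<or> u' = f (head R z)"
    using N1 N2 ends1 unfolding incident_def by (metis fst_conv snd_conv max.cobounded1 max.cobounded2 le_SucI n_def)+
  have sm: "small n (fst st)" "small n (snd st)"
    using small_ends[of "map (snd p) [0..<n]" "fst p"] by (simp_all add: st_def prefix_edge_def)
  have key: "f x = fst st \<or> f x = snd st \<Longrightarrow> x = iR \<or> x = tR" for x
    using sm by (auto simp: f_def small_def split: if_splits dest: sym)
  show ?thesis
  proof (cases "f (tail R z) = fst st \<or> f (tail R z) = snd st")
    case False
    then show ?thesis using i0 i1 by metis
  next
    case True
    show ?thesis
    proof (cases "f (head R z) = fst st \<or> f (head R z) = snd st")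
      case False
      then show ?thesis using i0 i1 by metis
    next
      case True2: True
      have "tail R z = head R z" using key[OF True] key[OF True2] noedge by metis
      then show ?thesis using i1 by metis
    qed
  qed
qed

lemma ends_in_verts:
  assumes "wf_digraph G0" "wf_digraph R" "e0 \<in> arcs G0" "set l \<subseteq> arcs R"
  shows "fst (edge_ends G0 R iR tR (e0,l)) \<in> expansion_verts G0 R iR tR (length l) \<and>
         snd (edge_ends G0 R iR tR (e0,l)) \<in> expansion_verts G0 R iR tR (length l)"
  using assms(4)
proof (induction l rule: rev_induct)
  case Nil
  then show ?case using assms(1,3) by (simp add: edge_ends_Nil expansion_verts_def wf_digraph.tail_in_verts wf_digraph.head_in_verts)
next
  case (snoc z l)
  have mono: "expansion_verts G0 R iR tR (length l) \<subseteq> expansion_verts G0 R iR tR (length (l @ [z]))"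
    unfolding expansion_verts_def by auto
  have z: "z \<in> arcs R" using snoc by simp
  have tv: "tail R z \<in> verts R" "head R z \<in> verts R" using z assms(2) by (auto simp: wf_digraph.tail_in_verts wf_digraph.head_in_verts)
  have new: "x \<in> verts R \<Longrightarrow> x \<noteq> iR \<Longrightarrow> x \<noteq> tR \<Longrightarrow> New e0 l x \<in> expansion_verts G0 R iR tR (length (l @ [z]))" for x
    unfolding expansion_verts_def using snoc.prems assms(3) by auto
  show ?case using snoc mono tv new unfolding edge_ends_snoc Let_def by auto
qed

lemma glued_represents:
  assumes exp: "expanding G0 e R iR tR" and pO: "p \<in> symbol_space G0 R" and qO: "q \<in> symbol_space G0 R"
    and gl: "glued G0 R iR tR p q" and pq: "p \<noteq> q"
  shows "\<exists>u\<in>gluing_vertices G0 R iR tR. represents G0 R iR tR p u \<and> represents G0 R iR tR q u"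
proof -
  define S where "S n = {u. incident G0 R iR tR (prefix_edge p n) u \<and> incident G0 R iR tR (prefix_edge q n) u}" for n
  have Sne: "S n \<noteq> {}" for n using gl by (auto simp: glued_def S_def)
  obtain K where K: "\<And>n. n \<ge> K \<Longrightarrow> prefix_edge p n \<noteq> prefix_edge q n"
  proof (cases "fst p = fst q")
    case False
    then show ?thesis using that[of 0] by (auto simp: prefix_edge_def)
  next
    case True
    then have "snd p \<noteq> snd q" using pq by (metis prod.collapse)
    then obtain i where i: "snd p i \<noteq> snd q i" by blast
    show ?thesis
    proof (rule that[of "Suc i"])
      fix n assume "Suc i \<le> n"
      then have "map (snd p) [0..<n] ! i \<noteq> map (snd q) [0..<n] ! i" using i by simp
      then show "prefix_edge p n \<noteq> prefix_edge q n" unfolding prefix_edge_def by (metis snd_conv)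
    qed
  qed
  have Sstep: "S (Suc n) \<subseteq> S n" if "n \<ge> K" for n
  proof
    fix u assume "u \<in> S (Suc n)"
    then have a: "incident G0 R iR tR (prefix_edge p n) u \<or> (\<exists>w. u = New (fst p) (map (snd p) [0..<n]) w)"
      and b: "incident G0 R iR tR (prefix_edge q n) u \<or> (\<exists>w. u = New (fst q) (map (snd q) [0..<n]) w)"
      unfolding S_def prefix_edge_Suc by (auto dest: incident_snoc simp: prefix_edge_def)
    have d: "prefix_edge p n \<noteq> prefix_edge q n" using K that by blast
    show "u \<in> S n"
      using a b d New_not_incident[of "fst p" "map (snd p) [0..<n]" "fst q" "map (snd q) [0..<n]"]
        New_not_incident[of "fst q" "map (snd q) [0..<n]" "fst p" "map (snd p) [0..<n]"]
      unfolding S_def by (auto simp: prefix_edge_def)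
  qed
  have mono: "S n \<subseteq> S m" if "K \<le> m" "m \<le> n" for m n
    using that(2,1)
  proof (induction n rule: dec_induct)
    case base then show ?case by simp
  next
    case (step n) then show ?case using Sstep[of n] by auto
  qed
  define a where "a = fst (edge_ends G0 R iR tR (prefix_edge p K))"
  define b where "b = snd (edge_ends G0 R iR tR (prefix_edge p K))"
  have SK: "S K \<subseteq> {a, b}" by (auto simp: S_def a_def b_def incident_def)
  have wf: "wf_digraph G0" "wf_digraph R" using exp
    by (auto simp: expanding_def replacement_system_def fin_digraph_def)
  have abGV: "a \<in> gluing_vertices G0 R iR tR" "b \<in> gluing_vertices G0 R iR tR"
    using ends_in_verts[OF wf, of "fst p" "map (snd p) [0..<K]"] pO
    by (fastforce simp: a_def b_def prefix_edge_def gluing_vertices_def symbol_space_def)+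
  show ?thesis
  proof (cases "\<forall>n\<ge>K. a \<in> S n")
    case True
    then show ?thesis using abGV unfolding represents_def S_def by blast
  next
    case False
    then obtain n1 where n1: "n1 \<ge> K" "a \<notin> S n1" by blast
    have "\<forall>n\<ge>n1. b \<in> S n"
    proof (intro allI impI)
      fix n assume "n \<ge> n1"
      then have "S n \<subseteq> S n1" "S n \<subseteq> S K" using mono n1 by auto
      then show "b \<in> S n" using Sne[of n] SK n1 by blast
    qed
    then show ?thesis using abGV unfolding represents_def S_def by blast
  qed
qed

lemma continue_rep:
  assumes exp: "expanding G0 e R iR tR" and e0: "e0 \<in> arcs G0" and zs: "set zs \<subseteq> arcs R"
    and inc: "incident G0 R iR tR (e0, zs) u"
  shows "\<exists>p\<in>symbol_space G0 R. represents G0 R iR tR p u"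
proof -
  have ne: "iR \<noteq> tR" and iv: "iR \<in> verts R" "tR \<in> verts R" and ni: "no_isolated R"
    using exp by (auto simp: expanding_def replacement_system_def)
  obtain zI where zI: "zI \<in> arcs R" "tail R zI = iR \<or> head R zI = iR"
    using ni iv unfolding no_isolated_def by blast
  obtain zT where zT: "zT \<in> arcs R" "tail R zT = tR \<or> head R zT = tR"
    using ni iv unfolding no_isolated_def by blast
  define nxt where "nxt b = (if b then tail R zI = iR else tail R zT = tR)" for b
  define s where "s = rec_nat (u = fst (edge_ends G0 R iR tR (e0,zs))) (\<lambda>_ b. nxt b)"
  define g where "g i = (if s i then zI else zT)" for i
  have inv: "u = (if s m then fst else snd) (edge_ends G0 R iR tR (e0, zs @ map g [0..<m]))" for m
  proof (induction m)
    case 0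
    then show ?case using inc by (auto simp: s_def incident_def)
  next
    case (Suc m)
    have eq: "zs @ map g [0..<Suc m] = (zs @ map g [0..<m]) @ [g m]" by simp
    have sS: "s (Suc m) = nxt (s m)" by (simp add: s_def)
    show ?case
    proof (cases "s m")
      case True
      then have gm: "g m = zI" and u: "u = fst (edge_ends G0 R iR tR (e0, zs @ map g [0..<m]))"
        using Suc True by (simp add: g_def, simp)
      show ?thesis unfolding eq edge_ends_snoc Let_def sS gm
        using True u zI(2) ne by (auto simp: nxt_def)
    next
      case False
      then have gm: "g m = zT" and u: "u = snd (edge_ends G0 R iR tR (e0, zs @ map g [0..<m]))"
        using Suc False by (simp add: g_def, simp)
      show ?thesis unfolding eq edge_ends_snoc Let_def sS gm
        using False u zT(2) ne by (auto simp: nxt_def)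
    qed
  qed
  define p where "p = (e0, \<lambda>i. if i < length zs then zs ! i else g (i - length zs))"
  have mapsplit: "map f [0..<k + m] = map f [0..<k] @ map (\<lambda>i. f (k + i)) [0..<m]" for f :: "nat \<Rightarrow> 'r" and k m
    by (induction m) auto
  have pre: "prefix_edge p (length zs + m) = (e0, zs @ map g [0..<m])" for m
  proof -
    have "map (snd p) [0..<length zs] = map (nth zs) [0..<length zs]"
      by (rule map_cong) (auto simp: p_def)
    also have "\<dots> = zs" by (rule map_nth)
    finally have a: "map (snd p) [0..<length zs] = zs" .
    have b: "map (\<lambda>i. snd p (length zs + i)) [0..<m] = map g [0..<m]"
      by (simp add: p_def)
    show ?thesis unfolding prefix_edge_def mapsplit a b by (simp add: p_def)
  qed
  have rep: "represents G0 R iR tR p u"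
    unfolding represents_def
  proof (intro exI[of _ "length zs"] allI impI)
    fix n assume "length zs \<le> n"
    then have "n = length zs + (n - length zs)" by simp
    then have "prefix_edge p n = (e0, zs @ map g [0..<n - length zs])" using pre by metis
    then show "incident G0 R iR tR (prefix_edge p n) u"
      using inv[of "n - length zs"] unfolding incident_def by (auto split: if_splits)
  qed
  have "p \<in> symbol_space G0 R"
    using e0 zs zI zT by (auto simp: symbol_space_def p_def g_def)
  then show ?thesis using rep by blast
qed

lemma exists_rep:
  assumes exp: "expanding G0 e R iR tR" and u: "u \<in> gluing_vertices G0 R iR tR"
  shows "\<exists>p\<in>symbol_space G0 R. represents G0 R iR tR p u"
proof -
  have niG: "no_isolated G0" and niR: "no_isolated R" and ne: "iR \<noteq> tR"
    using exp by (auto simp: expanding_def replacement_system_def)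
  from u obtain n where "u \<in> expansion_verts G0 R iR tR n" by (auto simp: gluing_vertices_def)
  then consider (O) v where "u = Orig v" "v \<in> verts G0"
    | (N) e0 zs w where "u = New e0 zs w" "e0 \<in> arcs G0" "set zs \<subseteq> arcs R" "w \<in> verts R" "w \<noteq> iR" "w \<noteq> tR"
    unfolding expansion_verts_def by blast
  then show ?thesis
  proof cases
    case O
    then obtain a where "a \<in> arcs G0" "tail G0 a = v \<or> head G0 a = v"
      using niG unfolding no_isolated_def by blast
    moreover then have "incident G0 R iR tR (a, []) u" using O
      by (auto simp: incident_def edge_ends_Nil)
    ultimately show ?thesis using continue_rep[OF exp, of a "[]"] by auto
  next
    case N
    then obtain z where z: "z \<in> arcs R" "tail R z = w \<or> head R z = w"
      using niR unfolding no_isolated_def by blast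
    have "incident G0 R iR tR (e0, zs @ [z]) u"
      using N z unfolding incident_def edge_ends_snoc Let_def by auto
    then show ?thesis using continue_rep[OF exp, of e0 "zs @ [z]"] N z by auto
  qed
qed

end

theorem proposition1p21:
  fixes G0 :: "('v,'e) pre_digraph" and e :: 'e
    and R :: "('w,'r) pre_digraph" and iR tR :: 'w
  assumes "expanding G0 e R iR tR"
  defines "\<Omega> \<equiv> symbol_space G0 R"
    and "GV \<equiv> gluing_vertices G0 R iR tR"
  shows "(\<forall>u\<in>GV. \<exists>p\<in>\<Omega>. represents G0 R iR tR p u)
       \<and> (\<forall>p\<in>\<Omega>. \<forall>u\<in>GV. \<forall>u'\<in>GV.
            represents G0 R iR tR p u \<and> represents G0 R iR tR p u' \<longrightarrow> u = u')
       \<and> (\<forall>p\<in>\<Omega>. \<forall>q\<in>\<Omega>. p \<noteq> q \<longrightarrow>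
            (glued G0 R iR tR p q \<longleftrightarrow>
             (\<exists>u\<in>GV. represents G0 R iR tR p u \<and> represents G0 R iR tR q u)))
       \<and> equiv \<Omega> {(p, q). p \<in> \<Omega> \<and> q \<in> \<Omega> \<and> glued G0 R iR tR p q}"
proof (intro conjI)
  show "\<forall>u\<in>GV. \<exists>p\<in>\<Omega>. represents G0 R iR tR p u"
    unfolding \<Omega>_def GV_def using exists_rep[OF assms(1)] by (intro ballI)
  show "\<forall>p\<in>\<Omega>. \<forall>u\<in>GV. \<forall>u'\<in>GV.
            represents G0 R iR tR p u \<and> represents G0 R iR tR p u' \<longrightarrow> u = u'"
  proof (intro ballI impI)
    fix p u u' assume "p \<in> \<Omega>" "represents G0 R iR tR p u \<and> represents G0 R iR tR p u'"
    then show "u = u'" using unique_rep[OF assms(1), of p u u'] unfolding \<Omega>_def by simp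
  qed
  show "\<forall>p\<in>\<Omega>. \<forall>q\<in>\<Omega>. p \<noteq> q \<longrightarrow>
            (glued G0 R iR tR p q \<longleftrightarrow>
             (\<exists>u\<in>GV. represents G0 R iR tR p u \<and> represents G0 R iR tR q u))"
  proof (intro ballI impI iffI)
    fix p q assume "p \<in> \<Omega>" "q \<in> \<Omega>" "p \<noteq> q" "glued G0 R iR tR p q"
    then show "\<exists>u\<in>GV. represents G0 R iR tR p u \<and> represents G0 R iR tR q u"
      using glued_represents[OF assms(1), of p q] unfolding \<Omega>_def GV_def by simp
  next
    fix p q assume "\<exists>u\<in>GV. represents G0 R iR tR p u \<and> represents G0 R iR tR q u"
    then obtain u where "represents G0 R iR tR p u" "represents G0 R iR tR q u" by blast
    then show "glued G0 R iR tR p q" by (rule represents_glued)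
  qed
  have gref: "glued G0 R iR tR p p" for p
    unfolding glued_def incident_def by blast
  have gsym: "glued G0 R iR tR p q \<Longrightarrow> glued G0 R iR tR q p" for p q
    unfolding glued_def by blast
  have gtrans: "glued G0 R iR tR p r"
    if A: "p \<in> \<Omega>" "q \<in> \<Omega>" "r \<in> \<Omega>" "glued G0 R iR tR p q" "glued G0 R iR tR q r" for p q r
  proof (cases "p = q \<or> q = r")
    case True
    then show ?thesis using A by auto
  next
    case False
    then obtain u where u: "represents G0 R iR tR p u" "represents G0 R iR tR q u"
      using glued_represents[OF assms(1), of p q] A unfolding \<Omega>_def by auto
    obtain u' where u': "represents G0 R iR tR q u'" "represents G0 R iR tR r u'"
      using glued_represents[OF assms(1), of q r] A False unfolding \<Omega>_def by auto
    have "u = u'" using unique_rep[OF assms(1), of q u u'] u u' A unfolding \<Omega>_def by simp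
    then show ?thesis using represents_glued[where p=p and u=u and r=r] u u' by simp
  qed
  show "equiv \<Omega> {(p, q). p \<in> \<Omega> \<and> q \<in> \<Omega> \<and> glued G0 R iR tR p q}"
  proof (rule equivI)
    show "refl_on \<Omega> {(p, q). p \<in> \<Omega> \<and> q \<in> \<Omega> \<and> glued G0 R iR tR p q}"
      by (rule refl_onI) (auto simp: gref)
    show "{(p, q). p \<in> \<Omega> \<and> q \<in> \<Omega> \<and> glued G0 R iR tR p q} \<subseteq> \<Omega> \<times> \<Omega>" by auto
    show "sym {(p, q). p \<in> \<Omega> \<and> q \<in> \<Omega> \<and> glued G0 R iR tR p q}"
      by (rule symI) (auto intro: gsym)
    show "trans {(p, q). p \<in> \<Omega> \<and> q \<in> \<Omega> \<and> glued G0 R iR tR p q}"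
      by (rule transI) (auto intro: gtrans)
  qed
qed

end
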